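(* Let $n\ge 2$ and let $P=(P_1,\dots,P_t)$ be a partition of $\{1,\dots,n+1\}$; put $n_i=|P_i|$ and, for $u\ge 1$, let $m_u$ be the number of parts of size $u$. Then $$|Aut({\cal K}(P))|=\Big(\prod_{i=1}^t (n_i+1)!\Big)\prod_{u\ge 1} m_u!\,.$$
   Context: For a partition $P=(P_1,\dots,P_t)$ of $\{1,\dots,n+1\}$, ${\cal K}(P)$ is the simplicial complex on the vertex set $\{1,\dots,n+1\}\cup\{p_1,\dots,p_t\}$ ($t$ new vertices) whose $n$-faces are the sets $\{y_1,\dots,y_{n+1}\}$ with, for each $i$, $y_i=i$ or $y_i=p_j$ where $i\in P_j$, subject to the $y_i$ being pairwise distinct; its faces are all nonempty subsets of these. $Aut({\cal K})$ is the group of permutations of the vertices of ${\cal K}$ mapping the set of faces onto itself. *)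

theory Defs
  imports Main "HOL-Library.Disjoint_Sets" "HOL-Combinatorics.Permutations"
begin

text \<open>A partition P of {1..n+1} is represented as a set of parts (partition_on).
  Vertices of K(P): Inl i for i in {1..n+1}, and Inr B for the new vertex p_B of a part B.\<close>

type_synonym vtx = "nat + nat set"

definition part_of :: "nat set set \<Rightarrow> nat \<Rightarrow> nat set" where
  "part_of P i = (THE B. B \<in> P \<and> i \<in> B)"

definition K_vertices :: "nat \<Rightarrow> nat set set \<Rightarrow> vtx set" where
  "K_vertices n P = Inl ` {1..n+1} \<union> Inr ` P"

definition K_facets :: "nat \<Rightarrow> nat set set \<Rightarrow> vtx set set" where
  "K_facets n P = { y ` {1..n+1} | y :: nat \<Rightarrow> vtx.
      (\<forall>i\<in>{1..n+1}. y i = Inl i \<or> y i = Inr (part_of P i)) \<and> inj_on y {1..n+1} }"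

definition K_faces :: "nat \<Rightarrow> nat set set \<Rightarrow> vtx set set" where
  "K_faces n P = {F. F \<noteq> {} \<and> (\<exists>G\<in>K_facets n P. F \<subseteq> G)}"

definition K_Aut :: "nat \<Rightarrow> nat set set \<Rightarrow> (vtx \<Rightarrow> vtx) set" where
  "K_Aut n P = {\<sigma>. \<sigma> permutes K_vertices n P \<and>
                   (\<lambda>F. \<sigma> ` F) ` K_faces n P = K_faces n P}"

end

theory Submission
  imports Defs "HOL-Library.FuncSet"
begin


lemma permutes_fib_image:
  assumes "p permutes S" "finite S" "\<forall>x\<in>S. g (p x) = g x"
  shows "p ` {x\<in>S. g x = k} = {x\<in>S. g x = k}"
proof (rule endo_inj_surj)
  show "finite {x\<in>S. g x = k}" using assms(2) by simp
  show "p ` {x\<in>S. g x = k} \<subseteq> {x\<in>S. g x = k}"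
    using assms permutes_in_image[OF assms(1)] by auto
  show "inj_on p {x\<in>S. g x = k}" using permutes_inj[OF assms(1)] by (auto simp: inj_on_def inj_def)
qed

lemma card_fib_perms:
  assumes "finite S"
  shows "card {p. p permutes S \<and> (\<forall>x\<in>S. g (p x) = g x)} =
         (\<Prod>k\<in>g ` S. fact (card {x\<in>S. g x = k}))"
proof -
  define F where "F k = {x\<in>S. g x = k}" for k
  define A where "A = {p. p permutes S \<and> (\<forall>x\<in>S. g (p x) = g x)}"
  define B where "B = (\<Pi>\<^sub>E k\<in>g ` S. {q. q permutes F k})"
  define \<Phi> where "\<Phi> p = (\<lambda>k\<in>g ` S. \<lambda>x. if x \<in> F k then p x else x)" for p :: "'a \<Rightarrow> 'a"
  define \<Psi> where "\<Psi> f = (\<lambda>x. if x \<in> S then f (g x) x else x)" for f :: "'b \<Rightarrow> 'a \<Rightarrow> 'a"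
  have finF: "finite (F k)" for k using assms by (simp add: F_def)
  have "bij_betw \<Phi> A B"
  proof (rule bij_betw_byWitness[where f'=\<Psi>])
    show "\<forall>a\<in>A. \<Psi> (\<Phi> a) = a"
    proof
      fix p assume "p \<in> A"
      hence p: "p permutes S" by (simp add: A_def)
      show "\<Psi> (\<Phi> p) = p"
        by (rule ext) (auto simp: \<Psi>_def \<Phi>_def F_def permutes_not_in[OF p])
    qed
    show "\<forall>f\<in>B. \<Phi> (\<Psi> f) = f"
    proof
      fix f assume f: "f \<in> B"
      show "\<Phi> (\<Psi> f) = f"
      proof (rule extensionalityI)
        show "\<Phi> (\<Psi> f) \<in> extensional (g ` S)" by (simp add: \<Phi>_def)
        show "f \<in> extensional (g ` S)" using f B_def PiE_iff by blast
        fix k assume k: "k \<in> g ` S"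
        hence fk: "f k permutes F k" using f by (auto simp: B_def)
        show "\<Phi> (\<Psi> f) k = f k"
          by (rule ext) (auto simp: \<Phi>_def \<Psi>_def k F_def permutes_not_in[OF fk])
      qed
    qed
    show "\<Phi> ` A \<subseteq> B"
    proof
      fix q assume "q \<in> \<Phi> ` A"
      then obtain p where pA: "p \<in> A" and q: "q = \<Phi> p" by auto
      have p: "p permutes S" and pg: "\<forall>x\<in>S. g (p x) = g x" using pA by (auto simp: A_def)
      have "(\<lambda>x. if x \<in> F k then p x else x) permutes F k" for k
      proof (rule bij_imp_permutes)
        have im: "p ` F k = F k" unfolding F_def by (rule permutes_fib_image[OF p assms pg])
        have "inj_on p (F k)" using permutes_inj[OF p] by (auto simp: inj_on_def inj_def)
        hence "bij_betw p (F k) (F k)" using im by (simp add: bij_betw_def)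
        thus "bij_betw (\<lambda>x. if x \<in> F k then p x else x) (F k) (F k)"
          by (rule bij_betw_cong[THEN iffD1, rotated]) auto
      qed auto
      thus "q \<in> B" by (auto simp: q \<Phi>_def B_def)
    qed
    show "\<Psi> ` B \<subseteq> A"
    proof
      fix p assume "p \<in> \<Psi> ` B"
      then obtain f where fB: "f \<in> B" and p: "p = \<Psi> f" by auto
      have fk: "f k permutes F k" if "k \<in> g ` S" for k using fB that by (auto simp: B_def)
      have pg: "\<forall>x\<in>S. g (p x) = g x \<and> p x \<in> S"
      proof
        fix x assume x: "x \<in> S"
        have "f (g x) x \<in> F (g x)" using permutes_in_image[OF fk[of "g x"]] x by (auto simp: F_def)
        thus "g (p x) = g x \<and> p x \<in> S" using x by (auto simp: p \<Psi>_def F_def)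
      qed
      have inj: "inj_on p S"
      proof (rule inj_onI)
        fix x y assume x: "x \<in> S" and y: "y \<in> S" and e: "p x = p y"
        have gxy: "g x = g y" using pg x y e by metis
        have "f (g x) x = f (g x) y" using e x y gxy by (simp add: p \<Psi>_def)
        thus "x = y" using permutes_inj[OF fk[of "g x"]] x by (auto simp: inj_def)
      qed
      have "p ` S = S" by (rule endo_inj_surj[OF assms _ inj]) (use pg in auto)
      hence "p permutes S"
        using inj by (intro bij_imp_permutes) (auto simp: bij_betw_def p \<Psi>_def)
      thus "p \<in> A" using pg by (auto simp: A_def)
    qed
  qed
  hence "card A = card B" by (rule bij_betw_same_card)
  also have "card B = (\<Prod>k\<in>g ` S. card {q. q permutes F k})"
    unfolding B_def by (rule card_PiE) (use assms in simp)
  also have "\<dots> = (\<Prod>k\<in>g ` S. fact (card (F k)))"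
    by (rule prod.cong) (auto intro: card_permutations finF)
  finally show ?thesis by (simp add: A_def F_def)
qed



definition blockof :: "'a set set \<Rightarrow> 'a \<Rightarrow> 'a set" where
  "blockof Q x = (THE b. b \<in> Q \<and> x \<in> b)"

lemma blockof_eq:
  assumes "partition_on V Q" "b \<in> Q" "x \<in> b"
  shows "blockof Q x = b"
  unfolding blockof_def
proof (rule the_equality)
  show "b \<in> Q \<and> x \<in> b" using assms by auto
  fix c assume "c \<in> Q \<and> x \<in> c"
  thus "c = b" using assms partition_onD2[OF assms(1)] by (auto simp: disjoint_def)
qed

lemma blockof_in:
  assumes "partition_on V Q" "x \<in> V"
  shows "blockof Q x \<in> Q \<and> x \<in> blockof Q x"
proof -
  obtain b where "b \<in> Q" "x \<in> b" using assms partition_onD1[OF assms(1)] by auto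
  thus ?thesis using blockof_eq[OF assms(1)] by auto
qed

lemma fib_perm_image:
  assumes Q: "partition_on V Q" and fin: "finite V" and t: "t permutes V"
    and tg: "\<forall>x\<in>V. blockof Q (t x) = blockof Q x" and b: "b \<in> Q"
  shows "t ` b = b"
proof -
  have bV: "b \<subseteq> V" using Q b partition_onD1 by blast
  have "{x\<in>V. blockof Q x = b} = b"
    using blockof_eq[OF Q b] blockof_in[OF Q] bV by blast
  thus ?thesis using permutes_fib_image[OF t fin tg, of b] by simp
qed

lemma card_block_perms:
  assumes Q: "partition_on V Q" and fin: "finite V"
  shows "card {\<sigma>. \<sigma> permutes V \<and> (\<forall>b\<in>Q. \<sigma> ` b \<in> Q)} =
    (\<Prod>k\<in>card ` Q. fact (card {b\<in>Q. card b = k})) * (\<Prod>b\<in>Q. fact (card b))"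
proof -
  define g where "g = blockof Q"
  define A where "A = {\<sigma>. \<sigma> permutes V \<and> (\<forall>b\<in>Q. \<sigma> ` b \<in> Q)}"
  define T where "T = {\<tau>. \<tau> permutes V \<and> (\<forall>x\<in>V. g (\<tau> x) = g x)}"
  define PP where "PP = {\<pi>. \<pi> permutes Q \<and> (\<forall>b\<in>Q. card (\<pi> b) = card b)}"
  define ind where "ind \<sigma> = (\<lambda>b. if b \<in> Q then \<sigma> ` b else b)" for \<sigma> :: "'a \<Rightarrow> 'a"
  define F where "F \<pi> = {\<sigma>\<in>A. ind \<sigma> = \<pi>}" for \<pi>
  have finQ: "finite Q" using finite_elements[OF fin Q] .
  have bV: "b \<subseteq> V" if "b \<in> Q" for b using Q that partition_onD1 by blast
  have finb: "finite b" if "b \<in> Q" for b using bV[OF that] fin finite_subset by blast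
  have bne: "b \<noteq> {}" if "b \<in> Q" for b using Q that partition_onD3 by blast
  have disj: "b \<inter> c = {}" if "b \<in> Q" "c \<in> Q" "b \<noteq> c" for b c
    using partition_onD2[OF Q] that by (auto simp: disjoint_def)
  have gV: "g x \<in> Q \<and> x \<in> g x" if "x \<in> V" for x using blockof_in[OF Q that] g_def by simp
  have gb: "g x = b" if "b \<in> Q" "x \<in> b" for x b using blockof_eq[OF Q that] g_def by simp
  have gim: "g ` V = Q"
  proof
    show "g ` V \<subseteq> Q" using gV by auto
    show "Q \<subseteq> g ` V"
    proof
      fix b assume b: "b \<in> Q"
      then obtain x where "x \<in> b" using bne by blast
      thus "b \<in> g ` V" using gb[OF b] bV[OF b] by force
    qed
  qed
  have fibb: "{x\<in>V. g x = b} = b" if "b \<in> Q" for b using gb[OF that] gV bV[OF that] by blast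
  have cardT: "card T = (\<Prod>b\<in>Q. fact (card b))"
    unfolding T_def card_fib_perms[OF fin] gim by (rule prod.cong) (auto simp: fibb)
  have cardPi: "card PP = (\<Prod>k\<in>card ` Q. fact (card {b\<in>Q. card b = k}))"
    unfolding PP_def by (rule card_fib_perms[OF finQ])
  have Timg: "\<tau> ` b = b" if "\<tau> \<in> T" "b \<in> Q" for \<tau> b
    using fib_perm_image[OF Q fin _ _ that(2), of \<tau>] that(1) by (auto simp: T_def g_def)
  have indPi: "ind \<sigma> \<in> PP" if "\<sigma> \<in> A" for \<sigma>
  proof -
    have s: "\<sigma> permutes V" and sQ: "\<forall>b\<in>Q. \<sigma> ` b \<in> Q" using that by (auto simp: A_def)
    have inj: "inj \<sigma>" using permutes_inj[OF s] .
    have ij: "inj_on (ind \<sigma>) Q"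
      by (rule inj_onI) (auto simp: ind_def inj_image_eq_iff[OF inj])
    have "ind \<sigma> ` Q = Q" by (rule endo_inj_surj[OF finQ _ ij]) (use sQ in \<open>auto simp: ind_def\<close>)
    hence "ind \<sigma> permutes Q" using ij by (intro bij_imp_permutes) (auto simp: bij_betw_def ind_def)
    moreover have "card (ind \<sigma> b) = card b" if "b \<in> Q" for b
      using that inj by (auto simp: ind_def card_image inj_on_def inj_def)
    ultimately show ?thesis by (auto simp: PP_def)
  qed
  have AU: "A = (\<Union>\<pi>\<in>PP. F \<pi>)" using indPi by (auto simp: F_def)
  have finA: "finite A"
    by (rule finite_subset[OF _ finite_permutations[OF fin]]) (auto simp: A_def)
  have cardF: "card (F \<pi>) = card T" if pi: "\<pi> \<in> PP" for \<pi>
  proof -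
    have p: "\<pi> permutes Q" and pc: "\<forall>b\<in>Q. card (\<pi> b) = card b" using pi by (auto simp: PP_def)
    have "\<forall>b\<in>Q. \<exists>h. bij_betw h b (\<pi> b)"
    proof
      fix b assume b: "b \<in> Q"
      have "\<pi> b \<in> Q" using permutes_in_image[OF p] b by simp
      thus "\<exists>h. bij_betw h b (\<pi> b)" using finite_same_card_bij finb b pc by metis
    qed
    then obtain H where H: "\<forall>b\<in>Q. bij_betw (H b) b (\<pi> b)" by metis
    define s0 where "s0 x = (if x \<in> V then H (g x) x else x)" for x
    have s0b: "s0 ` b = \<pi> b" if b: "b \<in> Q" for b
    proof -
      have "s0 ` b = H b ` b" using b gb bV[OF b] by (auto simp: s0_def image_def)
      thus ?thesis using H b bij_betw_imp_surj_on by metis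
    qed
    have s0in: "s0 x \<in> \<pi> (g x) \<and> \<pi> (g x) \<in> Q" if "x \<in> V" for x
      using s0b[of "g x"] gV[OF that] permutes_in_image[OF p] by auto
    have ij0: "inj_on s0 V"
    proof (rule inj_onI)
      fix x y assume x: "x \<in> V" and y: "y \<in> V" and e: "s0 x = s0 y"
      have "g x = g y"
      proof (rule ccontr)
        assume "g x \<noteq> g y"
        hence "\<pi> (g x) \<noteq> \<pi> (g y)" using permutes_inj[OF p] by (auto simp: inj_def)
        thus False using disj[of "\<pi> (g x)" "\<pi> (g y)"] s0in[OF x] s0in[OF y] e by auto
      qed
      hence "H (g x) x = H (g x) y" using e x y by (simp add: s0_def)
      moreover have "inj_on (H (g x)) (g x)" using H gV[OF x] bij_betw_imp_inj_on by blast
      ultimately show "x = y" using gV x y \<open>g x = g y\<close> by (metis inj_onD)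
    qed
    have "s0 ` V = V" by (rule endo_inj_surj[OF fin _ ij0]) (use s0in bV in blast)
    hence s0p: "s0 permutes V" using ij0 by (intro bij_imp_permutes) (auto simp: bij_betw_def s0_def)
    have s0F: "\<And>b. ind s0 b = \<pi> b"
      using s0b permutes_not_in[OF p] by (auto simp: ind_def)
    have s0A: "s0 \<in> A" using s0p s0b permutes_in_image[OF p] by (auto simp: A_def)
    have "bij_betw (\<lambda>\<tau>. s0 \<circ> \<tau>) T (F \<pi>)"
    proof (rule bij_betw_byWitness[where f'="\<lambda>\<sigma>. inv s0 \<circ> \<sigma>"])
      show "\<forall>a\<in>T. inv s0 \<circ> (s0 \<circ> a) = a" by (auto simp: permutes_inverses[OF s0p] fun_eq_iff)
      show "\<forall>a\<in>F \<pi>. s0 \<circ> (inv s0 \<circ> a) = a" by (auto simp: permutes_inverses[OF s0p] fun_eq_iff)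
      show "(\<lambda>\<tau>. s0 \<circ> \<tau>) ` T \<subseteq> F \<pi>"
      proof
        fix s assume "s \<in> (\<lambda>\<tau>. s0 \<circ> \<tau>) ` T"
        then obtain \<tau> where t: "\<tau> \<in> T" and s: "s = s0 \<circ> \<tau>" by auto
        have sp: "s permutes V" using s permutes_compose[OF _ s0p] t by (auto simp: T_def)
        have "s ` b = \<pi> b" if "b \<in> Q" for b using Timg[OF t that] s0b[OF that] s by (metis image_comp)
        thus "s \<in> F \<pi>" using sp permutes_in_image[OF p] permutes_not_in[OF p]
          by (auto simp: F_def A_def ind_def fun_eq_iff)
      qed
      show "(\<lambda>\<sigma>. inv s0 \<circ> \<sigma>) ` F \<pi> \<subseteq> T"
      proof
        fix t assume "t \<in> (\<lambda>\<sigma>. inv s0 \<circ> \<sigma>) ` F \<pi>"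
        then obtain \<sigma> where sF: "\<sigma> \<in> F \<pi>" and t: "t = inv s0 \<circ> \<sigma>" by auto
        have sp: "\<sigma> permutes V" and si: "ind \<sigma> = \<pi>" using sF by (auto simp: F_def A_def)
        have tp: "t permutes V" using t permutes_compose[OF sp permutes_inv[OF s0p]] by simp
        have "g (t x) = g x" if x: "x \<in> V" for x
        proof -
          have "\<sigma> x \<in> \<sigma> ` g x" using gV[OF x] by auto
          also have "\<sigma> ` g x = \<pi> (g x)" using fun_cong[OF si, of "g x"] gV[OF x] by (simp add: ind_def)
          also have "\<dots> = s0 ` g x" using s0b gV[OF x] by simp
          finally obtain z where z: "z \<in> g x" "\<sigma> x = s0 z" by auto
          have "t x = z" using z t permutes_inverses[OF s0p] by simp
          thus ?thesis using z gb gV[OF x] by simp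
        qed
        thus "t \<in> T" using tp by (auto simp: T_def)
      qed
    qed
    thus ?thesis by (simp add: bij_betw_same_card)
  qed
  have finPi: "finite PP"
    by (rule finite_subset[OF _ finite_permutations[OF finQ]]) (auto simp: PP_def)
  have "card A = (\<Sum>\<pi>\<in>PP. card (F \<pi>))"
    unfolding AU by (rule card_UN_disjoint[OF finPi]) (auto simp: F_def intro: finite_subset[OF _ finA])
  also have "\<dots> = card PP * card T" using cardF by simp
  finally show ?thesis using cardT cardPi by (simp add: A_def)
qed



definition blk :: "nat set \<Rightarrow> vtx set" where
  "blk B = insert (Inr B) (Inl ` B)"

context
  fixes n :: nat and P :: "nat set set"
  assumes P: "partition_on {1..n+1} P"
begin

lemma part_of_eq: "B \<in> P \<Longrightarrow> i \<in> B \<Longrightarrow> part_of P i = B"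
  using blockof_eq[OF P] by (simp add: part_of_def blockof_def)

lemma part_of_in: "i \<in> {1..n+1} \<Longrightarrow> part_of P i \<in> P \<and> i \<in> part_of P i"
  using blockof_in[OF P] by (simp add: part_of_def blockof_def)

lemma PB: "B \<in> P \<Longrightarrow> B \<subseteq> {1..n+1}"
  using P partition_onD1 by blast

lemma Pne: "B \<in> P \<Longrightarrow> B \<noteq> {}"
  using P partition_onD3 by blast

lemma Pdisj: "B \<in> P \<Longrightarrow> C \<in> P \<Longrightarrow> B \<noteq> C \<Longrightarrow> B \<inter> C = {}"
  using partition_onD2[OF P] by (auto simp: disjoint_def)

lemma blk_V: "B \<in> P \<Longrightarrow> blk B \<subseteq> K_vertices n P"
  using PB by (auto simp: blk_def K_vertices_def)

lemma blk_disj: "B \<in> P \<Longrightarrow> C \<in> P \<Longrightarrow> B \<noteq> C \<Longrightarrow> blk B \<inter> blk C = {}"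
  using Pdisj by (auto simp: blk_def)

lemma blk_inj: "inj blk"
  by (auto simp: inj_def blk_def)

lemma V_Un: "\<Union> (blk ` P) = K_vertices n P"
proof
  show "\<Union> (blk ` P) \<subseteq> K_vertices n P" using blk_V by blast
  show "K_vertices n P \<subseteq> \<Union> (blk ` P)"
  proof
    fix x assume x: "x \<in> K_vertices n P"
    show "x \<in> \<Union> (blk ` P)"
    proof (cases x)
      case (Inl i)
      hence "i \<in> {1..n+1}" using x by (auto simp: K_vertices_def)
      thus ?thesis using part_of_in Inl by (auto simp: blk_def)
    next
      case (Inr B)
      hence "B \<in> P" using x by (auto simp: K_vertices_def)
      thus ?thesis using Inr by (auto simp: blk_def)
    qed
  qed
qed

lemma partQ: "partition_on (K_vertices n P) (blk ` P)"
  unfolding partition_on_def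
proof (intro conjI)
  show "\<Union> (blk ` P) = K_vertices n P" by (rule V_Un)
  show "disjoint (blk ` P)" unfolding disjoint_def
  proof (intro ballI impI)
    fix a b assume "a \<in> blk ` P" "b \<in> blk ` P" "a \<noteq> b"
    then obtain B C where "B \<in> P" "C \<in> P" "a = blk B" "b = blk C" "B \<noteq> C" by auto
    thus "a \<inter> b = {}" using blk_disj by simp
  qed
  show "{} \<notin> blk ` P" by (auto simp: blk_def)
qed

lemma finV: "finite (K_vertices n P)"
  using finite_elements[OF _ P] by (simp add: K_vertices_def)

lemma faces_char:
  "F \<in> K_faces n P \<longleftrightarrow> F \<noteq> {} \<and> F \<subseteq> K_vertices n P \<and> (\<forall>B\<in>P. \<not> blk B \<subseteq> F)"
proof
  assume "F \<in> K_faces n P"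
  then obtain y where Fne: "F \<noteq> {}" and Fy: "F \<subseteq> y ` {1..n+1}"
    and yc: "\<forall>i\<in>{1..n+1}. y i = Inl i \<or> y i = Inr (part_of P i)"
    and yi: "inj_on y {1..n+1}"
    by (auto simp: K_faces_def K_facets_def)
  have "y ` {1..n+1} \<subseteq> K_vertices n P"
    using yc part_of_in by (force simp: K_vertices_def)
  moreover have "\<not> blk B \<subseteq> F" if B: "B \<in> P" for B
  proof
    assume "blk B \<subseteq> F"
    hence "Inr B \<in> y ` {1..n+1}" using Fy by (auto simp: blk_def)
    then obtain i where i: "i \<in> {1..n+1}" "y i = Inr B" by auto
    hence pi: "part_of P i = B" using yc by force
    hence "i \<in> B" using part_of_in i by auto
    hence "Inl i \<in> y ` {1..n+1}" using Fy \<open>blk B \<subseteq> F\<close> by (auto simp: blk_def)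
    then obtain j where j: "j \<in> {1..n+1}" "y j = Inl i" by auto
    hence "j = i" using yc by force
    thus False using i j by simp
  qed
  ultimately show "F \<noteq> {} \<and> F \<subseteq> K_vertices n P \<and> (\<forall>B\<in>P. \<not> blk B \<subseteq> F)"
    using Fne Fy by blast
next
  assume a: "F \<noteq> {} \<and> F \<subseteq> K_vertices n P \<and> (\<forall>B\<in>P. \<not> blk B \<subseteq> F)"
  hence "\<forall>B\<in>P. \<exists>x. x \<in> blk B \<and> x \<notin> F" by blast
  then obtain s where s: "\<forall>B\<in>P. s B \<in> blk B \<and> s B \<notin> F" by metis
  define y where "y i = (if s (part_of P i) = Inl i then Inr (part_of P i) else Inl i)" for i
  have yc: "\<forall>i\<in>{1..n+1}. y i = Inl i \<or> y i = Inr (part_of P i)" by (auto simp: y_def)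
  have yi: "inj_on y {1..n+1}"
  proof (rule inj_onI)
    fix i j assume "i \<in> {1..n+1}" "j \<in> {1..n+1}" "y i = y j"
    thus "i = j" by (auto simp: y_def split: if_splits)
  qed
  have "F \<subseteq> y ` {1..n+1}"
  proof
    fix x assume x: "x \<in> F"
    hence xV: "x \<in> K_vertices n P" using a by blast
    show "x \<in> y ` {1..n+1}"
    proof (cases x)
      case (Inl i)
      hence i: "i \<in> {1..n+1}" using xV by (auto simp: K_vertices_def)
      have "s (part_of P i) \<noteq> Inl i" using s part_of_in[OF i] x Inl by metis
      hence "y i = x" using Inl by (simp add: y_def)
      thus ?thesis using i by blast
    next
      case (Inr B)
      hence B: "B \<in> P" using xV by (auto simp: K_vertices_def)
      hence "s B \<in> blk B" "s B \<noteq> Inr B" using s x Inr by auto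
      then obtain i where i: "i \<in> B" "s B = Inl i" by (auto simp: blk_def)
      have pi: "part_of P i = B" using part_of_eq[OF B i(1)] .
      have "y i = x" using i pi Inr by (simp add: y_def)
      moreover have "i \<in> {1..n+1}" using PB[OF B] i by auto
      ultimately show ?thesis by blast
    qed
  qed
  moreover have "y ` {1..n+1} \<in> K_facets n P" using yc yi unfolding K_facets_def by blast
  ultimately show "F \<in> K_faces n P" using a unfolding K_faces_def by blast
qed

lemma finFaces: "finite (K_faces n P)"
proof -
  have "K_faces n P \<subseteq> Pow (K_vertices n P)" using faces_char by blast
  thus ?thesis using finV finite_subset by blast
qed

lemma Aut_eq: "K_Aut n P = {\<sigma>. \<sigma> permutes K_vertices n P \<and> (\<forall>b\<in>blk ` P. \<sigma> ` b \<in> blk ` P)}"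
proof (intro set_eqI iffI)
  fix \<sigma> assume "\<sigma> \<in> K_Aut n P"
  hence sp: "\<sigma> permutes K_vertices n P" and sF: "(\<lambda>F. \<sigma> ` F) ` K_faces n P = K_faces n P"
    by (auto simp: K_Aut_def)
  have inj: "inj \<sigma>" using permutes_inj[OF sp] .
  have "\<sigma> ` blk B \<in> blk ` P" if B: "B \<in> P" for B
  proof -
    have nf: "blk B \<notin> K_faces n P" using faces_char B by blast
    have SV: "\<sigma> ` blk B \<subseteq> K_vertices n P" using blk_V[OF B] permutes_image[OF sp] by blast
    have "\<sigma> ` blk B \<notin> K_faces n P"
    proof
      assume "\<sigma> ` blk B \<in> K_faces n P"
      then obtain G where "G \<in> K_faces n P" "\<sigma> ` blk B = \<sigma> ` G" using sF by blast
      thus False using nf inj by (simp add: inj_image_eq_iff)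
    qed
    moreover have "\<sigma> ` blk B \<noteq> {}" by (simp add: blk_def)
    ultimately obtain C where C: "C \<in> P" "blk C \<subseteq> \<sigma> ` blk B" using SV faces_char by blast
    show ?thesis
    proof (cases "blk C = \<sigma> ` blk B")
      case True thus ?thesis using C by auto
    next
      case False
      define T where "T = {x\<in>blk B. \<sigma> x \<in> blk C}"
      have TC: "\<sigma> ` T = blk C" using C by (auto simp: T_def)
      have "T \<noteq> {}" using TC by (auto simp: blk_def)
      moreover have "T \<subseteq> K_vertices n P" using blk_V[OF B] by (auto simp: T_def)
      moreover have "\<not> blk D \<subseteq> T" if D: "D \<in> P" for D
      proof
        assume DT: "blk D \<subseteq> T"
        hence "blk D \<subseteq> blk B" by (auto simp: T_def)
        hence "D = B" using blk_disj[OF D B] by (auto simp: blk_def)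
        hence "T = blk B" using DT by (auto simp: T_def)
        thus False using TC False by simp
      qed
      ultimately have "T \<in> K_faces n P" using faces_char by blast
      hence "blk C \<in> K_faces n P" using TC sF by blast
      thus ?thesis using faces_char C by blast
    qed
  qed
  thus "\<sigma> \<in> {\<sigma>. \<sigma> permutes K_vertices n P \<and> (\<forall>b\<in>blk ` P. \<sigma> ` b \<in> blk ` P)}" using sp by auto
next
  fix \<sigma> assume "\<sigma> \<in> {\<sigma>. \<sigma> permutes K_vertices n P \<and> (\<forall>b\<in>blk ` P. \<sigma> ` b \<in> blk ` P)}"
  hence sp: "\<sigma> permutes K_vertices n P" and sb: "\<forall>B\<in>P. \<sigma> ` blk B \<in> blk ` P" by auto
  have inj: "inj \<sigma>" using permutes_inj[OF sp] .
  have sub: "(\<lambda>F. \<sigma> ` F) ` K_faces n P \<subseteq> K_faces n P"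
  proof
    fix G assume "G \<in> (\<lambda>F. \<sigma> ` F) ` K_faces n P"
    then obtain F where F: "F \<in> K_faces n P" and G: "G = \<sigma> ` F" by auto
    have Fc: "F \<noteq> {}" "F \<subseteq> K_vertices n P" "\<forall>B\<in>P. \<not> blk B \<subseteq> F" using F faces_char by auto
    have "G \<noteq> {}" "G \<subseteq> K_vertices n P" using Fc G permutes_image[OF sp] by auto
    moreover have "\<not> blk C \<subseteq> G" if C: "C \<in> P" for C
    proof
      assume CG: "blk C \<subseteq> G"
      hence "Inr C \<in> G" by (auto simp: blk_def)
      then obtain z where z: "z \<in> F" "\<sigma> z = Inr C" using G by auto
      have "z \<in> \<Union> (blk ` P)" using z Fc V_Un by blast
      then obtain B where B: "B \<in> P" "z \<in> blk B" by auto
      obtain B' where B': "B' \<in> P" "\<sigma> ` blk B = blk B'" using sb B by auto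
      have "Inr C \<in> blk B'" using B' B z by force
      moreover have "Inr C \<in> blk C" by (simp add: blk_def)
      ultimately have "B' = C" using blk_disj[OF B'(1) C] by blast
      hence "\<sigma> ` blk B \<subseteq> \<sigma> ` F" using B' CG G by simp
      hence "blk B \<subseteq> F" using inj by (simp add: inj_image_subset_iff)
      thus False using Fc B by blast
    qed
    ultimately show "G \<in> K_faces n P" using faces_char by blast
  qed
  have "inj_on (\<lambda>F. \<sigma> ` F) (K_faces n P)" using inj by (auto simp: inj_on_def inj_image_eq_iff)
  hence "card ((\<lambda>F. \<sigma> ` F) ` K_faces n P) = card (K_faces n P)" by (rule card_image)
  hence "(\<lambda>F. \<sigma> ` F) ` K_faces n P = K_faces n P" using card_subset_eq[OF finFaces sub] by simp
  thus "\<sigma> \<in> K_Aut n P" using sp by (auto simp: K_Aut_def)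
qed

end



theorem proposition2p7:
  fixes n :: nat and P :: "nat set set"
  assumes "n \<ge> 2"
    and "partition_on {1..n+1} P"
  shows "card (K_Aut n P) =
           (\<Prod>B\<in>P. fact (card B + 1)) *
           (\<Prod>u\<in>{1..n+1}. fact (card {B\<in>P. card B = u}))"
proof -
  note Pp = assms(2)
  have finB: "finite B" if "B \<in> P" for B using PB[OF Pp that] finite_subset by blast
  have cblk: "card (blk B) = card B + 1" if "B \<in> P" for B
  proof -
    have "Inr B \<notin> Inl ` B" by auto
    moreover have "card (Inl ` B :: vtx set) = card B" by (rule card_image) (simp add: inj_on_def)
    ultimately show ?thesis using finB[OF that] by (simp add: blk_def)
  qed
  have injb: "inj_on blk X" for X using blk_inj[OF Pp] by (simp add: inj_on_def inj_def)
  have c1: "card (K_Aut n P) = (\<Prod>k\<in>card ` blk ` P. fact (card {b\<in>blk ` P. card b = k})) *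
            (\<Prod>b\<in>blk ` P. fact (card b))"
    unfolding Aut_eq[OF Pp] by (rule card_block_perms[OF partQ[OF Pp] finV[OF Pp]])
  have p2: "(\<Prod>b\<in>blk ` P. fact (card b)) = (\<Prod>B\<in>P. fact (card B + 1))"
    by (simp add: prod.reindex[OF injb] cblk)
  have im: "card ` blk ` P = Suc ` card ` P" using cblk by (force simp: image_image)
  have ceq: "card {b\<in>blk ` P. card b = Suc u} = card {B\<in>P. card B = u}" for u
  proof -
    have "{b\<in>blk ` P. card b = Suc u} = blk ` {B\<in>P. card B = u}" using cblk by force
    thus ?thesis by (simp add: card_image[OF injb])
  qed
  have "(\<Prod>k\<in>card ` blk ` P. fact (card {b\<in>blk ` P. card b = k})) =
        (\<Prod>u\<in>card ` P. fact (card {B\<in>P. card B = u}))"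
    unfolding im by (simp add: prod.reindex ceq)
  also have "\<dots> = (\<Prod>u\<in>{1..n+1}. fact (card {B\<in>P. card B = u}))"
  proof (rule prod.mono_neutral_left)
    show "finite {1..n+1}" by simp
    show "card ` P \<subseteq> {1..n+1}"
    proof
      fix k assume "k \<in> card ` P"
      then obtain B where B: "B \<in> P" "k = card B" by auto
      have "card B \<le> card {1..n+1}" using card_mono[OF _ PB[OF Pp B(1)]] by simp
      moreover have "card B \<noteq> 0" using Pne[OF Pp B(1)] finB[OF B(1)] by simp
      ultimately show "k \<in> {1..n+1}" using B by simp
    qed
    show "\<forall>i\<in>{1..n+1} - card ` P. fact (card {B\<in>P. card B = i}) = 1"
    proof
      fix i assume "i \<in> {1..n+1} - card ` P"
      hence "{B\<in>P. card B = i} = {}" by auto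
      thus "fact (card {B\<in>P. card B = i}) = 1" by (metis card.empty fact_0)
    qed
  qed
  finally have p1: "(\<Prod>k\<in>card ` blk ` P. fact (card {b\<in>blk ` P. card b = k})) =
        (\<Prod>u\<in>{1..n+1}. fact (card {B\<in>P. card B = u}))" .
  show ?thesis unfolding c1 p1 p2 by (rule mult.commute)
qed

end
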